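(* Let $v\in L^2(0,1)$ and let $f:[0,1]\times\mathbb{R}\to\mathbb{R}$ satisfy: (C(c)) $f$ is continuous on $[0,1]\times\mathbb{R}$ and has a continuous partial derivative $f_x$ with respect to the second variable on $[0,1]\times\mathbb{R}$; (C(f)) there exist positive constants $A,B$ with $A<\pi^2$ such that $|f(t,x)|\leqslant A|x|+B$ for all $t\in[0,1]$, $x\in\mathbb{R}$; (C($f_x$)) $\inf_{(t,x)\in[0,1]\times\mathbb{R}} f_x(t,x)>-\pi^2$. Then the Dirichlet problem $\ddot{x}(t)=f(t,x(t))+v(t)$ for a.e. $t\in[0,1]$, $x(0)=x(1)=0$, has a unique solution $x\in \mathbb{X}=H^2(0,1)\cap H^1_0(0,1)$.
   Context: $H^1_0(0,1)$ is the space of absolutely continuous $x:[0,1]\to\mathbb{R}$ with $x(0)=x(1)=0$ and weak derivative in $L^2(0,1)$; $H^2(0,1)$ is the space of functions in $H^1(0,1)$ whose derivative $\dot x$ also lies in $H^1(0,1)$. Solutions are understood in $\mathbb{X}=H^2(0,1)\cap H^1_0(0,1)$, the equation holding almost everywhere. *)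

theory Defs
  imports "HOL-Analysis.Analysis"
begin

definition L2_01 :: "(real \<Rightarrow> real) \<Rightarrow> bool" where
  "L2_01 g \<longleftrightarrow> g \<in> borel_measurable (lebesgue_on {0..1})
      \<and> integrable (lebesgue_on {0..1}) (\<lambda>t. (g t)\<^sup>2)"

text \<open>x is in H^1(0,1) with weak derivative y: x is absolutely continuous,
  namely the indefinite integral of y, and y is in L^2(0,1).\<close>
definition H1_with_deriv :: "(real \<Rightarrow> real) \<Rightarrow> (real \<Rightarrow> real) \<Rightarrow> bool" where
  "H1_with_deriv x y \<longleftrightarrow> L2_01 y \<and> integrable (lebesgue_on {0..1}) y
      \<and> (\<forall>t\<in>{0..1}. x t = x 0 + integral\<^sup>L (lebesgue_on {0..t}) y)"

text \<open>x in X = H^2(0,1) \<inter> H^1_0(0,1) solves x'' = f(t,x) + v a.e., x(0)=x(1)=0.\<close>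
definition dirichlet_solution ::
  "(real \<Rightarrow> real \<Rightarrow> real) \<Rightarrow> (real \<Rightarrow> real) \<Rightarrow> (real \<Rightarrow> real) \<Rightarrow> bool" where
  "dirichlet_solution f v x \<longleftrightarrow>
     (\<exists>x' x''. H1_with_deriv x x' \<and> H1_with_deriv x' x''
        \<and> x 0 = 0 \<and> x 1 = 0
        \<and> (AE t in lebesgue_on {0..1}. x'' t = f t (x t) + v t))"

end

theory Submission
  imports Defs
begin

definition good :: "(real \<Rightarrow> real) \<Rightarrow> (real \<Rightarrow> real) \<Rightarrow> bool" where
  "good w w' \<longleftrightarrow> continuous_on {0..1} w' \<and>
     (\<forall>t\<in>{0..1}. (w has_real_derivative w' t) (at t within {0..1})) \<and> w 0 = 0 \<and> w 1 = 0"

lemma good_cont: "good w w' \<Longrightarrow> continuous_on {0..1} w"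
  unfolding good_def by (meson DERIV_continuous continuous_at_imp_continuous_on continuous_on_eq_continuous_within)

lemma good_lin: "good a a' \<Longrightarrow> good b b' \<Longrightarrow>
   good (\<lambda>t. \<alpha> * a t + \<beta> * b t) (\<lambda>t. \<alpha> * a' t + \<beta> * b' t)"
  unfolding good_def
  by (auto intro!: continuous_intros derivative_eq_intros)

lemma good_diff: "good a a' \<Longrightarrow> good b b' \<Longrightarrow> good (\<lambda>t. a t - b t) (\<lambda>t. a' t - b' t)"
  unfolding good_def
  by (auto intro!: continuous_intros derivative_eq_intros)

lemma ftc01:
  assumes "\<And>t. t\<in>{a..b} \<Longrightarrow> (g has_real_derivative g' t) (at t within {a..b})" "a \<le> b"
  shows "(g' has_integral (g b - g a)) {a..b}"
  using fundamental_theorem_of_calculus[OF assms(2), of g g'] assms(1)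
  by (simp add: has_real_derivative_iff_has_vector_derivative)

lemma good_int:
  assumes "good w w'" "t \<in> {0..1}"
  shows "(w' has_integral w t) {0..t}"
proof -
  have "\<And>s. s\<in>{0..t} \<Longrightarrow> (w has_real_derivative w' s) (at s within {0..t})"
    using assms unfolding good_def
    by (metis DERIV_subset atLeastAtMost_iff atLeastatMost_subset_iff dual_order.refl dual_order.trans)
  from ftc01[OF this] assms show ?thesis unfolding good_def by auto
qed

lemma cont_int: "continuous_on {0..1} (g::real\<Rightarrow>real) \<Longrightarrow> g integrable_on {0..1}"
  using integrable_continuous_real by blast


lemma int_add: "continuous_on {0..1} (a::real\<Rightarrow>real) \<Longrightarrow> continuous_on {0..1} b \<Longrightarrow>
  integral {0..1} (\<lambda>t. a t + b t) = integral {0..1} a + integral {0..1} (b::real\<Rightarrow>real)"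
  by (intro integral_add cont_int)
lemma int_diff: "continuous_on {0..1} (a::real\<Rightarrow>real) \<Longrightarrow> continuous_on {0..1} b \<Longrightarrow>
  integral {0..1} (\<lambda>t. a t - b t) = integral {0..1} a - integral {0..1} (b::real\<Rightarrow>real)"
  by (intro integral_diff cont_int)
lemma int_cmul: "integral {0..1} (\<lambda>t. c * (a::real\<Rightarrow>real) t) = (c::real) * integral {0..1} a"
  by (rule integral_mult_right)
lemma int_le: "continuous_on {0..1} (a::real\<Rightarrow>real) \<Longrightarrow> continuous_on {0..1} b \<Longrightarrow>
  (\<And>t. t\<in>{0..1} \<Longrightarrow> a t \<le> b t) \<Longrightarrow> integral {0..1} a \<le> integral {0..1} (b::real\<Rightarrow>real)"
  by (intro integral_le cont_int) auto
lemma int_nonneg: "continuous_on {0..1} a \<Longrightarrow> 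
  (\<And>t. t\<in>{0..1} \<Longrightarrow> 0 \<le> a t) \<Longrightarrow> 0 \<le> integral {0..1} (a::real\<Rightarrow>real)"
  by (intro integral_nonneg cont_int) auto

lemma sup_bound:
  assumes g: "good w w'" and t: "t \<in> {0..1}"
  shows "(w t)\<^sup>2 \<le> integral {0..1} (\<lambda>s. (w' s)\<^sup>2)"
proof -
  have c: "continuous_on {0..1} w'" using g unfolding good_def by auto
  have ct: "continuous_on {0..t} w'" using t by (intro continuous_on_subset[OF c]) auto
  have wt: "w t = integral {0..t} w'" using good_int[OF g t] by (simp add: integral_unique)
  define m where "m = integral {0..1} (\<lambda>s. \<bar>w' s\<bar>)"
  have "\<bar>w t\<bar> \<le> integral {0..t} (\<lambda>s. \<bar>w' s\<bar>)"
    unfolding wt using integral_norm_bound_integral[of w' "{0..t}" "\<lambda>s. \<bar>w' s\<bar>"]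
    using ct integrable_continuous_real continuous_on_rabs by force
  also have "\<dots> \<le> m" unfolding m_def
    apply (rule integral_subset_le)
    using t ct c by (auto intro!: integrable_continuous_real continuous_intros)
  finally have wm: "\<bar>w t\<bar> \<le> m" .
  have cc: "continuous_on {0..1} (\<lambda>s. \<bar>w' s\<bar>)" "continuous_on {0..1} (\<lambda>s. (w' s)\<^sup>2)"
    using c by (auto intro!: continuous_intros)
  have "0 \<le> integral {0..1} (\<lambda>s. (\<bar>w' s\<bar> - m)\<^sup>2)"
    using cc by (intro int_nonneg) (auto intro!: continuous_intros)
  also have "integral {0..1} (\<lambda>s. (\<bar>w' s\<bar> - m)\<^sup>2) = 
      integral {0..1} (\<lambda>s. (w' s)\<^sup>2 + ((-2*m) * \<bar>w' s\<bar> + m\<^sup>2))"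
    by (rule arg_cong[where f="integral _"]) (auto simp: power2_eq_square algebra_simps)
  also have "\<dots> = integral {0..1} (\<lambda>s. (w' s)\<^sup>2) - m\<^sup>2"
  proof -
    have i1: "((\<lambda>s. (w' s)\<^sup>2) has_integral integral {0..1} (\<lambda>s. (w' s)\<^sup>2)) {0..1}"
      using cc cont_int by blast
    have i2: "((\<lambda>s. \<bar>w' s\<bar>) has_integral m) {0..1}"
      using cc cont_int unfolding m_def by blast
    have "((\<lambda>s. (w' s)\<^sup>2 + ((-2*m) * \<bar>w' s\<bar> + m\<^sup>2)) has_integral
          (integral {0..1} (\<lambda>s. (w' s)\<^sup>2) + ((-2*m) * m + m\<^sup>2))) {0..1}"
      by (intro has_integral_add i1 has_integral_mult_right i2)
        (use has_integral_const_real[of "m\<^sup>2" 0 1] in simp)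
    then show ?thesis by (simp add: integral_unique power2_eq_square)
  qed
  finally have "m\<^sup>2 \<le> integral {0..1} (\<lambda>s. (w' s)\<^sup>2)" by simp
  moreover have "(w t)\<^sup>2 \<le> m\<^sup>2" using wm by (metis abs_ge_zero order_trans power2_abs power_mono)
  ultimately show ?thesis by linarith
qed

lemma wirtinger:
  assumes g: "good w w'" and k: "0 < k" "k < pi\<^sup>2"
  shows "k * integral {0..1} (\<lambda>t. (w t)\<^sup>2) \<le> integral {0..1} (\<lambda>t. (w' t)\<^sup>2)"
proof -
  define s where "s = sqrt k"
  have s0: "0 < s" using k s_def by auto
  have ss: "s * s = k" using k s_def by (simp add: real_sqrt_mult_self)
  have spi: "s < pi" using k unfolding s_def
    by (metis pi_gt_zero less_le_not_le real_sqrt_abs real_sqrt_less_iff abs_of_nonneg)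
  have cpos: "0 < cos (s * (t - 1/2))" if "t \<in> {0..1}" for t
  proof (rule cos_gt_zero_pi)
    have "\<bar>t - 1/2\<bar> \<le> 1/2" using that by (auto simp: abs_if)
    hence "\<bar>s * (t - 1/2)\<bar> \<le> s * (1/2)" using s0 unfolding abs_mult by (simp add: mult_left_mono)
    hence "\<bar>s * (t - 1/2)\<bar> < pi / 2" using spi by linarith
    thus "-(pi/2) < s * (t - 1/2)" "s * (t - 1/2) < pi/2" by auto
  qed
  define \<psi> where "\<psi> t = - s * tan (s * (t - 1/2))" for t
  define \<Phi> where "\<Phi> t = \<psi> t * (w t)\<^sup>2" for t
  define \<Phi>' where "\<Phi>' t = (- s * (s * inverse ((cos (s * (t - 1/2)))\<^sup>2))) * (w t)\<^sup>2 
      + \<psi> t * (2 * w t * w' t)" for t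
  have cw: "continuous_on {0..1} w" "continuous_on {0..1} w'" using g good_cont good_def by auto
  have dPhi: "(\<Phi> has_real_derivative \<Phi>' t) (at t within {0..1})" if t: "t \<in> {0..1}" for t
  proof -
    have ct: "cos (s * (t - 1/2)) \<noteq> 0" using cpos[OF t] by auto
    have dw: "(w has_real_derivative w' t) (at t within {0..1})" using g t good_def by auto
    have dt: "((\<lambda>t. tan (s * (t - 1/2))) has_real_derivative (s * inverse ((cos (s * (t - 1/2)))\<^sup>2))) (at t within {0..1})"
    proof -
      have d1: "((\<lambda>t. s * (t - 1/2)) has_real_derivative s) (at t within {0..1})"
        by (auto intro!: derivative_eq_intros)
      have d2: "(tan has_real_derivative inverse ((cos (s * (t - 1/2)))\<^sup>2)) (at ((\<lambda>t. s * (t - 1/2)) t))"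
        using DERIV_tan[OF ct] by simp
      show ?thesis using DERIV_chain2[OF d2 d1] by (simp add: mult.commute)
    qed
    show ?thesis unfolding \<Phi>_def \<Phi>'_def \<psi>_def
      by (rule derivative_eq_intros dt dw refl | simp)+
  qed
  have ftc: "(\<Phi>' has_integral (\<Phi> 1 - \<Phi> 0)) {0..1}" by (rule ftc01[OF dPhi]) auto
  have P10: "\<Phi> 1 - \<Phi> 0 = 0" using g unfolding good_def \<Phi>_def by simp
  define q where "q t = (w' t - \<psi> t * w t)\<^sup>2" for t
  have cq: "continuous_on {0..1} q" unfolding q_def \<psi>_def using cw cpos
    by (auto intro!: continuous_intros simp: tan_def) (metis atLeastAtMost_iff less_irrefl)
  have iq: "(q has_integral integral {0..1} q) {0..1}" using cq cont_int by blast
  have q0: "0 \<le> integral {0..1} q" using cq by (intro int_nonneg) (auto simp: q_def)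
  have eq: "q t + \<Phi>' t = (w' t)\<^sup>2 - k * (w t)\<^sup>2" if t: "t \<in> {0..1}" for t
  proof -
    define c where "c = cos (s * (t - 1/2))"
    define sn where "sn = sin (s * (t - 1/2))"
    have c0: "c \<noteq> 0" using cpos[OF t] c_def by auto
    have sc: "sn\<^sup>2 + c\<^sup>2 = 1" unfolding c_def sn_def by simp
    have "q t + \<Phi>' t = (w' t)\<^sup>2 + k * (sn\<^sup>2 - 1) / c\<^sup>2 * (w t)\<^sup>2"
      unfolding q_def \<Phi>'_def \<psi>_def tan_def c_def[symmetric] sn_def[symmetric]
      using c0 by (simp add: field_simps power2_eq_square flip: ss)
    also have "(sn\<^sup>2 - 1) = - c\<^sup>2" using sc by simp
    finally show ?thesis using c0 by (simp add: field_simps)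
  qed
  have "((\<lambda>t. (w' t)\<^sup>2 - k * (w t)\<^sup>2) has_integral (integral {0..1} q + 0)) {0..1}"
    using has_integral_add[OF iq ftc] P10 eq by (subst has_integral_cong[symmetric]) auto
  hence "integral {0..1} (\<lambda>t. (w' t)\<^sup>2 - k * (w t)\<^sup>2) \<ge> 0" using q0 by (simp add: integral_unique)
  moreover have "integral {0..1} (\<lambda>t. (w' t)\<^sup>2 - k * (w t)\<^sup>2) = 
      integral {0..1} (\<lambda>t. (w' t)\<^sup>2) - k * integral {0..1} (\<lambda>t. (w t)\<^sup>2)"
    using cw by (simp add: int_diff int_cmul continuous_intros)
  ultimately show ?thesis by simp
qed

lemma ibp:
  assumes g: "good e e'" and cd: "continuous_on {0..1} d'" and ch: "continuous_on {0..1} h"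
    and dd: "\<And>t. t\<in>{0..1} \<Longrightarrow> (d' has_real_derivative h t) (at t within {0..1})"
  shows "integral {0..1} (\<lambda>t. d' t * e' t) = - integral {0..1} (\<lambda>t. h t * e t)"
proof -
  have ce: "continuous_on {0..1} e" "continuous_on {0..1} e'" using g good_cont good_def by auto
  have "((\<lambda>t. h t * e t + d' t * e' t) has_integral (d' 1 * e 1 - d' 0 * e 0)) {0..1}"
    by (rule ftc01) (use g dd in \<open>auto simp: good_def intro!: derivative_eq_intros\<close>)
  hence "integral {0..1} (\<lambda>t. h t * e t + d' t * e' t) = 0" using g by (simp add: good_def integral_unique)
  moreover have "integral {0..1} (\<lambda>t. h t * e t + d' t * e' t) = 
     integral {0..1} (\<lambda>t. h t * e t) + integral {0..1} (\<lambda>t. d' t * e' t)"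
    using ce cd ch by (intro int_add) (auto intro!: continuous_intros)
  ultimately show ?thesis by simp
qed

definition P :: "(real \<Rightarrow> real) \<Rightarrow> real \<Rightarrow> real" where "P h t = integral {0..t} h"
definition Q :: "(real \<Rightarrow> real) \<Rightarrow> real \<Rightarrow> real" where "Q h t = integral {0..t} (P h)"
definition Gr :: "(real \<Rightarrow> real) \<Rightarrow> real \<Rightarrow> real" where "Gr h t = Q h t - t * Q h 1"
definition Gd :: "(real \<Rightarrow> real) \<Rightarrow> real \<Rightarrow> real" where "Gd h t = P h t - Q h 1"

lemma P_deriv: "continuous_on {0..1} h \<Longrightarrow> t\<in>{0..1} \<Longrightarrow> (P h has_real_derivative h t) (at t within {0..1})"
  unfolding P_def by (rule integral_has_real_derivative)

lemma P_cont: "continuous_on {0..1} h \<Longrightarrow> continuous_on {0..1} (P h)"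
  unfolding P_def by (intro indefinite_integral_continuous_1 cont_int)

lemma Q_deriv: "continuous_on {0..1} h \<Longrightarrow> t\<in>{0..1} \<Longrightarrow> (Q h has_real_derivative P h t) (at t within {0..1})"
  unfolding Q_def by (rule integral_has_real_derivative) (auto intro: P_cont)

lemma green:
  assumes h: "continuous_on {0..1} h"
  shows "good (Gr h) (Gd h)" "\<And>t. t\<in>{0..1} \<Longrightarrow> (Gd h has_real_derivative h t) (at t within {0..1})"
    "continuous_on {0..1} (Gd h)"
proof -
  show cG: "continuous_on {0..1} (Gd h)" unfolding Gd_def using P_cont[OF h] by (auto intro!: continuous_intros)
  show "\<And>t. t\<in>{0..1} \<Longrightarrow> (Gd h has_real_derivative h t) (at t within {0..1})"
    unfolding Gd_def[abs_def] using P_deriv[OF h] by (auto intro!: derivative_eq_intros)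
  have "\<forall>t\<in>{0..1}. (Gr h has_real_derivative Gd h t) (at t within {0..1})"
    unfolding Gd_def Gr_def[abs_def] using Q_deriv[OF h] by (auto intro!: derivative_eq_intros)
  moreover have "Gr h 0 = 0" "Gr h 1 = 0" unfolding Gr_def Q_def by auto
  ultimately show "good (Gr h) (Gd h)" using cG unfolding good_def by auto
qed

lemma P_bound:
  assumes a: "continuous_on {0..1} a" and b: "continuous_on {0..1} b" 
    and B: "\<And>s. s\<in>{0..1} \<Longrightarrow> \<bar>a s - b s\<bar> \<le> B" and t: "t \<in> {0..1}"
  shows "\<bar>P a t - P b t\<bar> \<le> B"
proof -
  have B0: "0 \<le> B" using B[of 0] by auto
  have ca: "continuous_on {0..t} a" "continuous_on {0..t} b" using t
    by (auto intro: continuous_on_subset[OF a] continuous_on_subset[OF b])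
  have "P a t - P b t = integral {0..t} (\<lambda>s. a s - b s)" unfolding P_def
    using ca by (simp add: integral_diff integrable_continuous_real)
  also have "\<bar>\<dots>\<bar> \<le> B * (t - 0)"
    using integral_bound[of 0 t "\<lambda>s. a s - b s" B] t ca B by (auto intro!: continuous_intros)
  also have "\<dots> \<le> B" using t B0 by (simp add: mult_left_le)
  finally show ?thesis .
qed

lemma Gr_bound:
  assumes a: "continuous_on {0..1} a" and b: "continuous_on {0..1} b" 
    and B: "\<And>s. s\<in>{0..1} \<Longrightarrow> \<bar>a s - b s\<bar> \<le> B" and t: "t \<in> {0..1}"
  shows "\<bar>Gr a t - Gr b t\<bar> \<le> 2 * B"
proof -
  have "\<bar>Q a t - Q b t\<bar> \<le> B" if t: "t\<in>{0..1}" for t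
    using P_bound[OF P_cont[OF a] P_cont[OF b] P_bound[OF a b B] t] 
    by (simp only: Q_def P_def[of "P a"] P_def[of "P b"])
  hence q1: "\<bar>Q a t - Q b t\<bar> \<le> B" and q2: "\<bar>Q a 1 - Q b 1\<bar> \<le> B" using t by auto
  have "\<bar>t * (Q a 1 - Q b 1)\<bar> \<le> \<bar>Q a 1 - Q b 1\<bar>" using t
    by (simp add: abs_mult mult_left_le_one_le)
  moreover have "Gr a t - Gr b t = (Q a t - Q b t) - t * (Q a 1 - Q b 1)" unfolding Gr_def by (simp add: algebra_simps)
  ultimately show ?thesis using q1 q2 by linarith
qed

lemma amgm: "0 < (M::real) \<Longrightarrow> 0 \<le> L \<Longrightarrow> L * (\<bar>x\<bar> * \<bar>y\<bar>) \<le> (L/2) * (M * x\<^sup>2 + y\<^sup>2 / M)"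
proof -
  assume M: "0 < M" and L: "0 \<le> L"
  have "0 \<le> (M * \<bar>x\<bar> - \<bar>y\<bar>)\<^sup>2" by simp
  hence "2 * M * (\<bar>x\<bar> * \<bar>y\<bar>) \<le> M\<^sup>2 * x\<^sup>2 + y\<^sup>2" by (simp add: power2_eq_square algebra_simps)
  hence "(2 * M * (\<bar>x\<bar> * \<bar>y\<bar>)) / (2*M) \<le> (M\<^sup>2 * x\<^sup>2 + y\<^sup>2) / (2*M)" using M
    by (intro divide_right_mono) auto
  moreover have "(1/2)*(M * x\<^sup>2 + y\<^sup>2/M) = (M\<^sup>2 * x\<^sup>2 + y\<^sup>2)/(2*M)" using M 
    by (simp add: field_simps power2_eq_square)
  moreover have "(2 * M * (\<bar>x\<bar> * \<bar>y\<bar>)) / (2*M) = \<bar>x\<bar> * \<bar>y\<bar>" using M by simp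
  ultimately have "\<bar>x\<bar> * \<bar>y\<bar> \<le> (1/2) * (M * x\<^sup>2 + y\<^sup>2 / M)" by linarith
  hence "L * (\<bar>x\<bar> * \<bar>y\<bar>) \<le> L * ((1/2) * (M * x\<^sup>2 + y\<^sup>2 / M))" using L by (rule mult_left_mono)
  thus ?thesis by simp
qed

lemma coeff_ineq:
  fixes \<tau> \<theta> M :: real
  assumes "0 \<le> \<theta>" "\<theta> < 1" "\<tau> = (1 - \<theta>) / (1 + M\<^sup>2)"
  shows "(1-\<tau>)\<^sup>2 + 2*\<tau>*(1-\<tau>)*\<theta> + \<tau>\<^sup>2 * M\<^sup>2 \<le> 1 - \<tau> * (1 - \<theta>)"
proof -
  have pos: "0 < 1 + M\<^sup>2" by (simp add: add_pos_nonneg)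
  have t1: "\<tau> * (1 + M\<^sup>2) = 1 - \<theta>" using pos unfolding assms(3) by simp
  have t0: "0 \<le> \<tau>" using pos assms(2) unfolding assms(3) by simp
  have "(1-\<tau>)\<^sup>2 + 2*\<tau>*(1-\<tau>)*\<theta> + \<tau>\<^sup>2 * M\<^sup>2 = 1 - 2*\<tau>*(1-\<theta>) + \<tau> * (\<tau> * (1 + M\<^sup>2)) - 2*\<tau>\<^sup>2*\<theta>"
    by (simp add: power2_eq_square algebra_simps)
  also have "\<dots> = 1 - \<tau>*(1-\<theta>) - 2*\<tau>\<^sup>2*\<theta>" unfolding t1 by (simp add: algebra_simps)
  also have "\<dots> \<le> 1 - \<tau>*(1-\<theta>)"
  proof -
    have "0 \<le> \<tau>\<^sup>2*\<theta>" using assms(1) by simp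
    thus ?thesis by linarith
  qed
  finally show ?thesis .
qed

lemma alg1: "M \<noteq> 0 \<Longrightarrow> ((M*k)/2)*(M*a + b/M) = (M\<^sup>2/2)*(k*a) + (k*b)/(2::real)"
  by (simp add: field_simps power2_eq_square)

lemma contract:
  assumes ge: "good e e'" and gd: "good d d'" and ch: "continuous_on {0..1} h"
    and dd: "\<And>t. t\<in>{0..1} \<Longrightarrow> (d' has_real_derivative h t) (at t within {0..1})"
    and hL: "\<And>t. t\<in>{0..1} \<Longrightarrow> \<bar>h t\<bar> \<le> L * \<bar>e t\<bar>"
    and hm: "\<And>t. t\<in>{0..1} \<Longrightarrow> c0 * (e t)\<^sup>2 \<le> h t * e t"
    and c0: "c0 \<le> 0" "- c0 < k" and k: "0 < k" "k < pi\<^sup>2" and L: "0 < L"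
    and \<tau>: "\<tau> = (1 - (-c0/k)) / (1 + (L/k)\<^sup>2)"
  shows "integral {0..1} (\<lambda>t. ((1-\<tau>) * e' t + \<tau> * d' t)\<^sup>2) \<le> 
         (1 - \<tau> * (1 - (-c0/k))) * integral {0..1} (\<lambda>t. (e' t)\<^sup>2)"
proof -
  define \<theta> where "\<theta> = -c0/k"
  define M where "M = L/k"
  have th: "0 \<le> \<theta>" "\<theta> < 1" unfolding \<theta>_def
  proof -
    have k0: "0 < k" using k by simp
    show "0 \<le> -c0/k" using c0(1) k0 by (simp add: divide_nonpos_pos)
    have "(-k)/k < c0/k" using c0(2) k0 by (intro divide_strict_right_mono) auto
    thus "-c0/k < 1" using k0 by simp
  qed
  have M0: "0 < M" using L k by (simp add: M_def)
  have ce: "continuous_on {0..1} e" "continuous_on {0..1} e'" using ge good_cont good_def by auto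
  have cd: "continuous_on {0..1} d" "continuous_on {0..1} d'" using gd good_cont good_def by auto
  define Ee where "Ee = integral {0..1} (\<lambda>t. (e' t)\<^sup>2)"
  define Ed where "Ed = integral {0..1} (\<lambda>t. (d' t)\<^sup>2)"
  define X where "X = integral {0..1} (\<lambda>t. d' t * e' t)"
  define Iee where "Iee = integral {0..1} (\<lambda>t. (e t)\<^sup>2)"
  define Idd where "Idd = integral {0..1} (\<lambda>t. (d t)\<^sup>2)"
  have W1: "k * Iee \<le> Ee" unfolding Iee_def Ee_def by (rule wirtinger[OF ge k])
  have W2: "k * Idd \<le> Ed" unfolding Idd_def Ed_def by (rule wirtinger[OF gd k])
  have X1: "X = - integral {0..1} (\<lambda>t. h t * e t)" unfolding X_def by (rule ibp[OF ge cd(2) ch dd])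
  have "c0 * Iee \<le> integral {0..1} (\<lambda>t. h t * e t)" unfolding Iee_def int_cmul[symmetric]
    using ce ch hm by (intro int_le) (auto intro!: continuous_intros)
  hence "X \<le> - c0 * Iee" using X1 by simp
  also have "- c0 * Iee = \<theta> * (k * Iee)" using k by (simp add: \<theta>_def)
  also have "\<dots> \<le> \<theta> * Ee" using W1 th by (simp add: mult_left_mono)
  finally have XE: "X \<le> \<theta> * Ee" .
  have Ed1: "Ed = - integral {0..1} (\<lambda>t. h t * d t)" unfolding Ed_def power2_eq_square
    by (rule ibp[OF gd cd(2) ch dd])
  have "- integral {0..1} (\<lambda>t. h t * d t) \<le> integral {0..1} (\<lambda>t. (L/2) * (M * (e t)\<^sup>2 + (d t)\<^sup>2 / M))"
    unfolding integral_neg[symmetric]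
  proof (intro int_le)
    fix t :: real assume t: "t \<in> {0..1}"
    have "- (h t * d t) \<le> \<bar>h t\<bar> * \<bar>d t\<bar>" by (simp add: abs_mult[symmetric])
    also have "\<dots> \<le> L * \<bar>e t\<bar> * \<bar>d t\<bar>" using hL[OF t] by (simp add: mult_right_mono)
    also have "\<dots> \<le> (L/2) * (M * (e t)\<^sup>2 + (d t)\<^sup>2 / M)" using amgm[OF M0, of L "e t" "d t"] L
      by (simp add: mult.assoc)
    finally show "- (h t * d t) \<le> (L/2) * (M * (e t)\<^sup>2 + (d t)\<^sup>2 / M)" .
  qed (use ce cd ch M0 in \<open>auto intro!: continuous_intros\<close>)
  also have "integral {0..1} (\<lambda>t. (L/2) * (M * (e t)\<^sup>2 + (d t)\<^sup>2 / M)) = (L/2) * (M * Iee + Idd / M)"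
  proof -
    have "((\<lambda>t. (L/2) * (M * (e t)\<^sup>2 + (d t)\<^sup>2 / M)) has_integral ((L/2) * (M * Iee + Idd / M))) {0..1}"
      unfolding Iee_def Idd_def using ce cd
      by (intro has_integral_mult_right has_integral_add has_integral_divide integrable_integral cont_int)
        (auto intro!: continuous_intros)
    thus ?thesis by (rule integral_unique)
  qed
  finally have "Ed \<le> (L/2) * (M * Iee + Idd / M)" using Ed1 by simp
  also have "\<dots> = (M\<^sup>2/2) * (k * Iee) + (k * Idd) / 2"
  proof -
    have "L = M * k" using k by (simp add: M_def)
    thus ?thesis using alg1[of M k Iee Idd] M0 by simp
  qed
  also have "\<dots> \<le> (M\<^sup>2/2) * Ee + Ed / 2" using W1 W2 by (intro add_mono mult_left_mono) auto
  finally have EdE: "Ed \<le> M\<^sup>2 * Ee" by simp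
  have tau: "\<tau> = (1 - \<theta>) / (1 + M\<^sup>2)" using \<tau> \<theta>_def M_def by simp
  have t0: "0 \<le> \<tau>" "\<tau> \<le> 1"
  proof -
    have p: "1 \<le> 1 + M\<^sup>2" by simp
    show "0 \<le> \<tau>" unfolding tau using th p by (intro divide_nonneg_pos) (auto simp: add_pos_nonneg)
    have "(1 - \<theta>) / (1 + M\<^sup>2) \<le> 1 - \<theta>" using divide_left_mono[OF p, of "1-\<theta>"] th p by simp
    thus "\<tau> \<le> 1" unfolding tau using th by simp
  qed
  have "integral {0..1} (\<lambda>t. ((1-\<tau>) * e' t + \<tau> * d' t)\<^sup>2) = (1-\<tau>)\<^sup>2 * Ee + 2*\<tau>*(1-\<tau>) * X + \<tau>\<^sup>2 * Ed"
  proof -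
    have "((\<lambda>t. (1-\<tau>)\<^sup>2 * (e' t)\<^sup>2 + (2*\<tau>*(1-\<tau>)) * (d' t * e' t) + \<tau>\<^sup>2 * (d' t)\<^sup>2) has_integral 
        ((1-\<tau>)\<^sup>2 * Ee + 2*\<tau>*(1-\<tau>) * X + \<tau>\<^sup>2 * Ed)) {0..1}"
      unfolding Ee_def Ed_def X_def using ce cd
      by (intro has_integral_mult_right has_integral_add integrable_integral cont_int)
        (auto intro!: continuous_intros)
    moreover have "\<And>t. ((1-\<tau>) * e' t + \<tau> * d' t)\<^sup>2 = (1-\<tau>)\<^sup>2 * (e' t)\<^sup>2 + (2*\<tau>*(1-\<tau>)) * (d' t * e' t) + \<tau>\<^sup>2 * (d' t)\<^sup>2"
      by (simp add: power2_eq_square algebra_simps)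
    ultimately show ?thesis by (simp add: integral_unique)
  qed
  also have "\<dots> \<le> (1-\<tau>)\<^sup>2 * Ee + 2*\<tau>*(1-\<tau>) * (\<theta> * Ee) + \<tau>\<^sup>2 * (M\<^sup>2 * Ee)"
    using XE EdE t0 by (intro add_mono mult_left_mono) auto
  also have "\<dots> = ((1-\<tau>)\<^sup>2 + 2*\<tau>*(1-\<tau>)*\<theta> + \<tau>\<^sup>2 * M\<^sup>2) * Ee" by (simp add: algebra_simps)
  also have "\<dots> \<le> (1 - \<tau> * (1 - \<theta>)) * Ee"
    using coeff_ineq[OF th tau] by (rule mult_right_mono) (simp add: Ee_def int_nonneg ce continuous_intros)
  finally show ?thesis unfolding Ee_def \<theta>_def .
qed

lemma cont_comp:
  assumes Gc: "continuous_on ({0..1} \<times> UNIV) (\<lambda>(t, x). G t x)" and x: "continuous_on {0..1} x"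
  shows "continuous_on {0..1} (\<lambda>s. G s (x s) :: real)"
proof -
  have "continuous_on {0..1} (\<lambda>s. (\<lambda>(t, x). G t x) (s, x s))"
    by (rule continuous_on_compose2[OF Gc]) (auto intro!: continuous_intros x)
  thus ?thesis by simp
qed

definition stp :: "(real\<Rightarrow>real\<Rightarrow>real) \<Rightarrow> real \<Rightarrow> (real\<Rightarrow>real)\<times>(real\<Rightarrow>real) \<Rightarrow> (real\<Rightarrow>real)\<times>(real\<Rightarrow>real)" where
  "stp G \<tau> p = (\<lambda>t. (1-\<tau>) * fst p t + \<tau> * Gr (\<lambda>s. G s (fst p s)) t,
                \<lambda>t. (1-\<tau>) * snd p t + \<tau> * Gd (\<lambda>s. G s (fst p s)) t)"

lemma fixpoint:
  fixes G :: "real \<Rightarrow> real \<Rightarrow> real"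
  assumes Gc: "continuous_on ({0..1} \<times> UNIV) (\<lambda>(t, x). G t x)"
    and GL: "\<And>t a b. t\<in>{0..1} \<Longrightarrow> \<bar>G t a - G t b\<bar> \<le> L * \<bar>a - b\<bar>"
    and Gm: "\<And>t a b. t\<in>{0..1} \<Longrightarrow> c0 * (a - b)\<^sup>2 \<le> (G t a - G t b) * (a - b)"
    and c0: "c0 \<le> 0" "- c0 < k" and k: "0 < k" "k < pi\<^sup>2" and L: "0 < L"
  shows "\<exists>u. continuous_on {0..1} u \<and> (\<forall>t\<in>{0..1}. u t = Gr (\<lambda>s. G s (u s)) t)"
proof -
  define \<tau> where "\<tau> = (1 - (-c0/k)) / (1 + (L/k)\<^sup>2)"
  define q where "q = 1 - \<tau> * (1 - (-c0/k))"
  have th: "0 \<le> -c0/k" "-c0/k < 1"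
  proof -
    show "0 \<le> -c0/k" using c0(1) k(1) by (simp add: divide_nonpos_pos)
    have "(-k)/k < c0/k" using c0(2) k(1) by (intro divide_strict_right_mono) auto
    thus "-c0/k < 1" using k(1) by simp
  qed
  have tpos: "0 < \<tau>" unfolding \<tau>_def using th by (intro divide_pos_pos) (auto simp: add_pos_nonneg)
  have t1: "\<tau> \<le> 1"
  proof -
    have p: "1 \<le> 1 + (L/k)\<^sup>2" by simp
    have "(1 - (-c0/k)) / (1 + (L/k)\<^sup>2) \<le> (1 - (-c0/k)) / 1" using divide_left_mono[OF p, of "1-(-c0/k)"] th p by simp
    thus ?thesis unfolding \<tau>_def using th by simp
  qed
  have q1: "q < 1" unfolding q_def using tpos th by simp
  have q0: "0 \<le> q"
  proof -
    have "0 \<le> (1-\<tau>)\<^sup>2 + 2*\<tau>*(1-\<tau>)*(-c0/k) + \<tau>\<^sup>2 * (L/k)\<^sup>2"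
      by (intro add_nonneg_nonneg mult_nonneg_nonneg) (use tpos t1 th in auto)
    also have "\<dots> \<le> q" unfolding q_def by (rule coeff_ineq[OF th \<tau>_def])
    finally show ?thesis .
  qed
  define it where "it n = (stp G \<tau> ^^ n) (\<lambda>t. 0, \<lambda>t. 0)" for n
  define x where "x n = fst (it n)" for n
  define x' where "x' n = snd (it n)" for n
  have xS: "x (Suc n) = (\<lambda>t. (1-\<tau>) * x n t + \<tau> * Gr (\<lambda>s. G s (x n s)) t)" for n
    unfolding x_def it_def by (simp add: stp_def)
  have xS': "x' (Suc n) = (\<lambda>t. (1-\<tau>) * x' n t + \<tau> * Gd (\<lambda>s. G s (x n s)) t)" for n
    unfolding x_def x'_def it_def by (simp add: stp_def)
  have x0: "x 0 = (\<lambda>t. 0)" "x' 0 = (\<lambda>t. 0)" unfolding x_def x'_def it_def by auto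
  have gx: "good (x n) (x' n)" for n
  proof (induction n)
    case 0 show ?case unfolding x0 good_def by auto
  next
    case (Suc n)
    have "continuous_on {0..1} (\<lambda>s. G s (x n s))" by (rule cont_comp[OF Gc good_cont[OF Suc]])
    from good_lin[OF Suc green(1)[OF this]] show ?case unfolding xS xS' .
  qed
  have cx: "continuous_on {0..1} (x n)" for n using good_cont[OF gx] .
  have cG: "continuous_on {0..1} (\<lambda>s. G s (x n s))" for n by (rule cont_comp[OF Gc cx])
  define E where "E n = integral {0..1} (\<lambda>t. (x' (Suc n) t - x' n t)\<^sup>2)" for n
  have Estep: "E (Suc n) \<le> q * E n" for n
  proof -
    let ?e = "\<lambda>t. x (Suc n) t - x n t" and ?e' = "\<lambda>t. x' (Suc n) t - x' n t"
    let ?d = "\<lambda>t. Gr (\<lambda>s. G s (x (Suc n) s)) t - Gr (\<lambda>s. G s (x n s)) t"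
    let ?d' = "\<lambda>t. Gd (\<lambda>s. G s (x (Suc n) s)) t - Gd (\<lambda>s. G s (x n s)) t"
    let ?h = "\<lambda>t. G t (x (Suc n) t) - G t (x n t)"
    have ge: "good ?e ?e'" by (rule good_diff[OF gx gx])
    have gd: "good ?d ?d'" by (rule good_diff[OF green(1)[OF cG] green(1)[OF cG]])
    have ch: "continuous_on {0..1} ?h" using cG[of "Suc n"] cG[of n] by (auto intro!: continuous_intros)
    have dd: "(?d' has_real_derivative ?h t) (at t within {0..1})" if "t\<in>{0..1}" for t
      using green(2)[OF cG that] green(2)[OF cG that] by (auto intro!: derivative_eq_intros)
    have "integral {0..1} (\<lambda>t. ((1-\<tau>) * ?e' t + \<tau> * ?d' t)\<^sup>2) \<le> q * integral {0..1} (\<lambda>t. (?e' t)\<^sup>2)"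
      unfolding q_def
      by (rule contract[OF ge gd ch dd GL Gm c0 k L \<tau>_def])
    moreover have "(\<lambda>t. ((1-\<tau>) * ?e' t + \<tau> * ?d' t)\<^sup>2) = (\<lambda>t. (x' (Suc (Suc n)) t - x' (Suc n) t)\<^sup>2)"
      unfolding xS'[of "Suc n"] xS'[of n] by (simp add: algebra_simps)
    ultimately show ?thesis unfolding E_def by simp
  qed
  have En: "E n \<le> q^n * E 0" for n
  proof (induction n)
    case (Suc n) thus ?case using Estep[of n] q0 by (smt (verit) mult.assoc mult_left_mono power_Suc)
  qed simp
  define D where "D = sqrt (E 0)"
  have diff: "\<bar>x (Suc n) t - x n t\<bar> \<le> D * sqrt q ^ n" if t: "t\<in>{0..1}" for n t
  proof -
    have "(x (Suc n) t - x n t)\<^sup>2 \<le> E n" unfolding E_def by (rule sup_bound[OF good_diff[OF gx gx] t])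
    also have "\<dots> \<le> q^n * E 0" by (rule En)
    finally have "sqrt ((x (Suc n) t - x n t)\<^sup>2) \<le> sqrt (q^n * E 0)" by (rule real_sqrt_le_mono)
    hence "\<bar>x (Suc n) t - x n t\<bar> \<le> sqrt (q^n * E 0)" by (simp only: real_sqrt_abs)
    also have "sqrt (q^n * E 0) = D * sqrt q ^ n" unfolding D_def real_sqrt_mult real_sqrt_power by simp
    finally show ?thesis .
  qed
  have sq: "\<bar>sqrt q\<bar> < 1" using q0 q1 by simp
  have summ: "summable (\<lambda>n. D * sqrt q ^ n)" by (intro summable_mult summable_geometric) (use sq in simp)
  have ul0: "uniform_limit {0..1} (\<lambda>n t. \<Sum>i<n. x (Suc i) t - x i t) (\<lambda>t. suminf (\<lambda>i. x (Suc i) t - x i t)) sequentially"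
    by (rule Weierstrass_m_test[OF _ summ]) (use diff in auto)
  define u where "u t = suminf (\<lambda>i. x (Suc i) t - x i t)" for t
  have tel: "(\<lambda>n t. \<Sum>i<n. x (Suc i) t - x i t) = x"
  proof (intro ext)
    fix n t show "(\<Sum>i<n. x (Suc i) t - x i t) = x n t"
      using sum_lessThan_telescope[of "\<lambda>i. x i t" n] x0 by simp
  qed
  have ul: "uniform_limit {0..1} x u sequentially" using ul0 unfolding tel u_def[abs_def] .
  have cu: "continuous_on {0..1} u"
    by (rule uniform_limit_theorem[OF _ ul]) (auto intro: always_eventually cx)
  have cGu: "continuous_on {0..1} (\<lambda>s. G s (u s))" by (rule cont_comp[OF Gc cu])
  have fp: "u t = Gr (\<lambda>s. G s (u s)) t" if t: "t \<in> {0..1}" for t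
  proof -
    have l1: "(\<lambda>n. x n t) \<longlonglongrightarrow> u t" by (rule tendsto_uniform_limitI[OF ul t])
    have l2: "(\<lambda>n. Gr (\<lambda>s. G s (x n s)) t) \<longlonglongrightarrow> Gr (\<lambda>s. G s (u s)) t"
    proof (rule tendstoI)
      fix \<epsilon> :: real assume e: "0 < \<epsilon>"
      have "\<forall>\<^sub>F n in sequentially. \<forall>s\<in>{0..1}. dist (x n s) (u s) < \<epsilon> / (4 * L)"
        by (rule uniform_limitD[OF ul]) (use e L in simp)
      thus "\<forall>\<^sub>F n in sequentially. dist (Gr (\<lambda>s. G s (x n s)) t) (Gr (\<lambda>s. G s (u s)) t) < \<epsilon>"
      proof eventually_elim
        case (elim n)
        have "\<bar>G s (x n s) - G s (u s)\<bar> \<le> L * (\<epsilon> / (4 * L))" if s: "s\<in>{0..1}" for s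
        proof -
          have "\<bar>G s (x n s) - G s (u s)\<bar> \<le> L * \<bar>x n s - u s\<bar>" by (rule GL[OF s])
          also have "\<dots> \<le> L * (\<epsilon> / (4 * L))" using elim s L by (intro mult_left_mono) (auto simp: dist_real_def less_imp_le)
          finally show ?thesis .
        qed
        from Gr_bound[OF cG cGu this t] have "\<bar>Gr (\<lambda>s. G s (x n s)) t - Gr (\<lambda>s. G s (u s)) t\<bar> \<le> 2 * (L * (\<epsilon> / (4 * L)))" .
        also have "\<dots> = \<epsilon> / 2" using L by simp
        finally show ?case using e by (simp add: dist_real_def)
      qed
    qed
    have "(\<lambda>n. x (Suc n) t) \<longlonglongrightarrow> (1-\<tau>) * u t + \<tau> * Gr (\<lambda>s. G s (u s)) t"
      unfolding xS by (intro tendsto_intros l1 l2)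
    moreover have "(\<lambda>n. x (Suc n) t) \<longlonglongrightarrow> u t" using l1 by (rule LIMSEQ_Suc)
    ultimately have "u t = (1-\<tau>) * u t + \<tau> * Gr (\<lambda>s. G s (u s)) t" using LIMSEQ_unique by blast
    hence "\<tau> * (u t - Gr (\<lambda>s. G s (u s)) t) = 0" by (simp add: algebra_simps)
    thus ?thesis using tpos by simp
  qed
  show ?thesis using cu fp by blast
qed

lemma mvt_ex:
  fixes f f' :: "real \<Rightarrow> real"
  assumes d: "\<And>x. (f has_real_derivative f' x) (at x)"
  shows "\<exists>\<xi>. min a b \<le> \<xi> \<and> \<xi> \<le> max a b \<and> f a - f b = f' \<xi> * (a - b)"
proof (cases a b rule: linorder_cases)
  case less
  from MVT2[OF less, of f f'] d obtain z where "a < z" "z < b" "f b - f a = (b - a) * f' z" by blast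
  thus ?thesis using less by (intro exI[of _ z]) (auto simp: algebra_simps)
next
  case equal thus ?thesis by auto
next
  case greater
  from MVT2[OF greater, of f f'] d obtain z where "b < z" "z < a" "f a - f b = (a - b) * f' z" by blast
  thus ?thesis using greater by (intro exI[of _ z]) (auto simp: algebra_simps)
qed

definition cl :: "real \<Rightarrow> real \<Rightarrow> real" where "cl R w = max (-R) (min R w)"

lemma cl_props:
  assumes R: "0 \<le> R"
  shows "\<bar>cl R w\<bar> \<le> R" "\<bar>cl R w\<bar> \<le> \<bar>w\<bar>" "\<bar>w\<bar> \<le> R \<Longrightarrow> cl R w = w"
    "a \<le> b \<Longrightarrow> cl R a \<le> cl R b" "a \<le> b \<Longrightarrow> cl R b - cl R a \<le> b - a"
  using R unfolding cl_def by (auto simp: abs_if max_def min_def split: if_splits)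

lemma cl_prod:
  assumes R: "0 \<le> R"
  shows "0 \<le> (cl R a - cl R b) * (a - b)" "(cl R a - cl R b) * (a - b) \<le> (a - b)\<^sup>2"
    "\<bar>cl R a - cl R b\<bar> \<le> \<bar>a - b\<bar>"
proof -
  have "0 \<le> (cl R a - cl R b) * (a - b) \<and> (cl R a - cl R b) * (a - b) \<le> (a - b)\<^sup>2 \<and> \<bar>cl R a - cl R b\<bar> \<le> \<bar>a - b\<bar>"
  proof (cases "a \<le> b")
    case True
    have m: "cl R a \<le> cl R b" "cl R b - cl R a \<le> b - a" using cl_props[OF R] True by auto
    have "(cl R b - cl R a) * (b - a) \<le> (b - a) * (b - a)" using m True by (intro mult_right_mono) auto
    moreover have "0 \<le> (cl R b - cl R a) * (b - a)" using m True by auto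
    ultimately show ?thesis using m True by (auto simp: power2_eq_square algebra_simps)
  next
    case False
    have m: "cl R b \<le> cl R a" "cl R a - cl R b \<le> a - b" using cl_props[OF R] False by auto
    have "(cl R a - cl R b) * (a - b) \<le> (a - b) * (a - b)" using m False by (intro mult_right_mono) auto
    moreover have "0 \<le> (cl R a - cl R b) * (a - b)" using m False by auto
    ultimately show ?thesis using m False by (auto simp: power2_eq_square algebra_simps)
  qed
  thus "0 \<le> (cl R a - cl R b) * (a - b)" "(cl R a - cl R b) * (a - b) \<le> (a - b)\<^sup>2"
    "\<bar>cl R a - cl R b\<bar> \<le> \<bar>a - b\<bar>" by auto
qed

lemma trunc_props:
  fixes f f' :: "real \<Rightarrow> real"
  assumes d: "\<And>x. (f has_real_derivative f' x) (at x)" and R: "0 \<le> R"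
    and lo: "\<And>x. c \<le> f' x" and K: "\<And>x. \<bar>x\<bar> \<le> R \<Longrightarrow> \<bar>f' x\<bar> \<le> K"
  shows "\<bar>f (cl R a) - f (cl R b)\<bar> \<le> K * \<bar>a - b\<bar>"
    "min c 0 * (a - b)\<^sup>2 \<le> (f (cl R a) - f (cl R b)) * (a - b)"
proof -
  obtain \<xi> where \<xi>: "min (cl R a) (cl R b) \<le> \<xi>" "\<xi> \<le> max (cl R a) (cl R b)"
    "f (cl R a) - f (cl R b) = f' \<xi> * (cl R a - cl R b)"
    using mvt_ex[OF d] by blast
  have "\<bar>\<xi>\<bar> \<le> R" using \<xi>(1,2) cl_props(1)[OF R, of a] cl_props(1)[OF R, of b] by (auto simp: abs_le_iff)
  hence Kx: "\<bar>f' \<xi>\<bar> \<le> K" by (rule K)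
  have "\<bar>f (cl R a) - f (cl R b)\<bar> = \<bar>f' \<xi>\<bar> * \<bar>cl R a - cl R b\<bar>" using \<xi>(3) by (simp add: abs_mult)
  also have "\<dots> \<le> K * \<bar>a - b\<bar>" using Kx cl_prod(3)[OF R, of a b] by (intro mult_mono) auto
  finally show "\<bar>f (cl R a) - f (cl R b)\<bar> \<le> K * \<bar>a - b\<bar>" .
  define p where "p = (cl R a - cl R b) * (a - b)"
  have p: "0 \<le> p" "p \<le> (a - b)\<^sup>2" unfolding p_def using cl_prod[OF R] by auto
  have "min c 0 * (a - b)\<^sup>2 \<le> min c 0 * p" using p by (intro mult_left_mono_neg) auto
  also have "\<dots> \<le> f' \<xi> * p" using p lo[of \<xi>] by (intro mult_right_mono) auto
  also have "f' \<xi> * p = (f (cl R a) - f (cl R b)) * (a - b)" unfolding p_def \<xi>(3) by simp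
  finally show "min c 0 * (a - b)\<^sup>2 \<le> (f (cl R a) - f (cl R b)) * (a - b)" .
qed

lemma amgm2: "0 < (\<epsilon>::real) \<Longrightarrow> B * \<bar>x\<bar> \<le> \<epsilon> * x\<^sup>2 + B\<^sup>2 / (4 * \<epsilon>)"
proof -
  assume e: "0 < \<epsilon>"
  have "0 \<le> (2 * \<epsilon> * \<bar>x\<bar> - B)\<^sup>2" by simp
  hence "4 * \<epsilon> * (B * \<bar>x\<bar>) \<le> 4 * \<epsilon> * (\<epsilon> * x\<^sup>2) + B\<^sup>2" by (simp add: power2_eq_square algebra_simps)
  hence "(4 * \<epsilon> * (B * \<bar>x\<bar>)) / (4 * \<epsilon>) \<le> (4 * \<epsilon> * (\<epsilon> * x\<^sup>2) + B\<^sup>2) / (4 * \<epsilon>)"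
    using e by (intro divide_right_mono) auto
  moreover have "(4 * \<epsilon> * (\<epsilon> * x\<^sup>2) + B\<^sup>2) / (4 * \<epsilon>) = \<epsilon> * x\<^sup>2 + B\<^sup>2 / (4 * \<epsilon>)" using e
    by (simp add: add_divide_distrib)
  moreover have "(4 * \<epsilon> * (B * \<bar>x\<bar>)) / (4 * \<epsilon>) = B * \<bar>x\<bar>" using e by simp
  ultimately show ?thesis by linarith
qed

lemma classical:
  fixes F Fx :: "real \<Rightarrow> real \<Rightarrow> real" and A B c :: real
  assumes Fc: "continuous_on ({0..1} \<times> UNIV) (\<lambda>(t, x). F t x)"
    and Fd: "\<And>t x. t \<in> {0..1} \<Longrightarrow> ((\<lambda>y. F t y) has_real_derivative Fx t x) (at x)"
    and Fxc: "continuous_on ({0..1} \<times> UNIV) (\<lambda>(t, x). Fx t x)"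
    and Fg: "\<And>t x. t \<in> {0..1} \<Longrightarrow> \<bar>F t x\<bar> \<le> A * \<bar>x\<bar> + B"
    and A: "0 \<le> A" "A < pi\<^sup>2"
    and Fm: "\<And>t x. t \<in> {0..1} \<Longrightarrow> c \<le> Fx t x" and c: "- (pi\<^sup>2) < c"
  shows "\<exists>u u'. good u u' \<and> (\<forall>t\<in>{0..1}. (u' has_real_derivative F t (u t)) (at t within {0..1}))"
proof -
  have B0: "0 \<le> B" using Fg[of 0 0] by simp
  define k where "k = (max (max A (-c)) 0 + pi\<^sup>2) / 2"
  have pi2: "0 < pi\<^sup>2" by simp
  have kA: "A < k" and kc: "-c < k" and k0: "0 < k" and kpi: "k < pi\<^sup>2"
    unfolding k_def using A c pi2 by (auto simp: max_def)
  define \<epsilon> where "\<epsilon> = (k - A) / 2"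
  have e0: "0 < \<epsilon>" using kA by (simp add: \<epsilon>_def)
  define R where "R = sqrt k * B / (k - A)"
  have R0: "0 \<le> R" unfolding R_def using kA k0 B0 by simp
  obtain K where K: "\<And>t y. t \<in> {0..1} \<Longrightarrow> \<bar>y\<bar> \<le> R \<Longrightarrow> \<bar>Fx t y\<bar> \<le> K"
  proof -
    have "compact ((\<lambda>(t, x). Fx t x) ` ({0..1} \<times> {-R..R}))"
      by (intro compact_continuous_image continuous_on_subset[OF Fxc] compact_Times) auto
    then obtain a where a: "\<forall>z\<in>(\<lambda>(t, x). Fx t x) ` ({0..1} \<times> {-R..R}). norm z \<le> a"
      using compact_imp_bounded bounded_iff by metis
    show ?thesis
    proof (rule that)
      fix t y :: real assume "t \<in> {0..1}" "\<bar>y\<bar> \<le> R"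
      hence "(t, y) \<in> {0..1} \<times> {-R..R}" by (auto simp: abs_le_iff)
      thus "\<bar>Fx t y\<bar> \<le> a" using a by fastforce
    qed
  qed
  define L where "L = max K 0 + 1"
  have L0: "0 < L" unfolding L_def by simp
  define G where "G t w = F t (cl R w)" for t w
  have Gc: "continuous_on ({0..1} \<times> UNIV) (\<lambda>(t, w). G t w)"
  proof -
    have "continuous_on ({0..1} \<times> UNIV) (\<lambda>p. (\<lambda>(t, x). F t x) ((\<lambda>p. (fst p, cl R (snd p))) p))"
      by (rule continuous_on_compose2[OF Fc]) (auto simp: cl_def case_prod_unfold intro!: continuous_intros)
    thus ?thesis unfolding G_def by (simp add: case_prod_unfold)
  qed
  have GL: "\<bar>G t a - G t b\<bar> \<le> L * \<bar>a - b\<bar>" if t: "t \<in> {0..1}" for t a b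
  proof -
    have "\<bar>G t a - G t b\<bar> \<le> K * \<bar>a - b\<bar>" unfolding G_def
      by (rule trunc_props(1)[OF Fd[OF t] R0 Fm[OF t] K[OF t]])
    also have "\<dots> \<le> L * \<bar>a - b\<bar>" unfolding L_def by (intro mult_right_mono) auto
    finally show ?thesis .
  qed
  have Gm: "min c 0 * (a - b)\<^sup>2 \<le> (G t a - G t b) * (a - b)" if t: "t \<in> {0..1}" for t a b
    unfolding G_def by (rule trunc_props(2)[OF Fd[OF t] R0 Fm[OF t] K[OF t]])
  have c0: "min c 0 \<le> 0" "- min c 0 < k" using kc k0 by auto
  obtain u0 where cu0: "continuous_on {0..1} u0" and fu0: "\<forall>t\<in>{0..1}. u0 t = Gr (\<lambda>s. G s (u0 s)) t"
    using fixpoint[OF Gc GL Gm c0 k0 kpi L0] by blast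
  define h where "h s = G s (u0 s)" for s
  have ch: "continuous_on {0..1} h" unfolding h_def by (rule cont_comp[OF Gc cu0])
  define u where "u = Gr h"
  define u' where "u' = Gd h"
  have gu: "good u u'" unfolding u_def u'_def by (rule green(1)[OF ch])
  have du: "(u' has_real_derivative h t) (at t within {0..1})" if "t\<in>{0..1}" for t
    unfolding u'_def by (rule green(2)[OF ch that])
  have hu: "h t = G t (u t)" if "t \<in> {0..1}" for t using fu0 that unfolding h_def u_def by simp
  have du2: "(u' has_real_derivative G t (u t)) (at t within {0..1})" if "t\<in>{0..1}" for t
    using du[OF that] hu[OF that] by simp
  have cGu: "continuous_on {0..1} (\<lambda>t. G t (u t))" by (rule cont_comp[OF Gc good_cont[OF gu]])
  have cu: "continuous_on {0..1} u" "continuous_on {0..1} u'" using gu good_cont good_def by auto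
  define Eu where "Eu = integral {0..1} (\<lambda>t. (u' t)\<^sup>2)"
  define Iuu where "Iuu = integral {0..1} (\<lambda>t. (u t)\<^sup>2)"
  have "Eu = - integral {0..1} (\<lambda>t. G t (u t) * u t)" unfolding Eu_def power2_eq_square
    by (rule ibp[OF gu cu(2) cGu du2])
  also have "\<dots> \<le> integral {0..1} (\<lambda>t. (A + \<epsilon>) * (u t)\<^sup>2 + B\<^sup>2 / (4 * \<epsilon>))"
    unfolding integral_neg[symmetric]
  proof (intro int_le)
    fix t :: real assume t: "t \<in> {0..1}"
    have Gg: "\<bar>G t (u t)\<bar> \<le> A * \<bar>u t\<bar> + B"
    proof -
      have "\<bar>G t (u t)\<bar> \<le> A * \<bar>cl R (u t)\<bar> + B" unfolding G_def by (rule Fg[OF t])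
      also have "\<dots> \<le> A * \<bar>u t\<bar> + B" using cl_props(2)[OF R0] A by (simp add: mult_left_mono)
      finally show ?thesis .
    qed
    have "- (G t (u t) * u t) \<le> \<bar>G t (u t)\<bar> * \<bar>u t\<bar>" by (simp add: abs_mult[symmetric])
    also have "\<dots> \<le> (A * \<bar>u t\<bar> + B) * \<bar>u t\<bar>" using Gg by (simp add: mult_right_mono)
    also have "\<dots> = A * (u t)\<^sup>2 + B * \<bar>u t\<bar>" by (simp add: algebra_simps power2_eq_square)
    also have "\<dots> \<le> A * (u t)\<^sup>2 + (\<epsilon> * (u t)\<^sup>2 + B\<^sup>2 / (4 * \<epsilon>))" using amgm2[OF e0] by simp
    also have "\<dots> = (A + \<epsilon>) * (u t)\<^sup>2 + B\<^sup>2 / (4 * \<epsilon>)" by (simp add: algebra_simps)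
    finally show "- (G t (u t) * u t) \<le> (A + \<epsilon>) * (u t)\<^sup>2 + B\<^sup>2 / (4 * \<epsilon>)" .
  qed (use cu cGu in \<open>auto intro!: continuous_intros\<close>)
  also have "integral {0..1} (\<lambda>t. (A + \<epsilon>) * (u t)\<^sup>2 + B\<^sup>2 / (4 * \<epsilon>)) = (A + \<epsilon>) * Iuu + B\<^sup>2 / (4 * \<epsilon>)"
  proof -
    have ci: "((\<lambda>t. B\<^sup>2 / (4 * \<epsilon>)) has_integral B\<^sup>2 / (4 * \<epsilon>)) {0..1::real}"
      using has_integral_const_real[of "B\<^sup>2 / (4 * \<epsilon>)" 0 1] by simp
    have "((\<lambda>t. (A + \<epsilon>) * (u t)\<^sup>2 + B\<^sup>2 / (4 * \<epsilon>)) has_integral ((A + \<epsilon>) * Iuu + B\<^sup>2 / (4 * \<epsilon>))) {0..1}"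
      unfolding Iuu_def using cu
      by (intro has_integral_add has_integral_mult_right integrable_integral cont_int ci)
        (auto intro!: continuous_intros)
    thus ?thesis by (simp add: integral_unique)
  qed
  finally have E1: "Eu \<le> (A + \<epsilon>) * Iuu + B\<^sup>2 / (4 * \<epsilon>)" .
  have W: "k * Iuu \<le> Eu" unfolding Iuu_def Eu_def by (rule wirtinger[OF gu k0 kpi])
  have "k * Eu \<le> (A + \<epsilon>) * (k * Iuu) + k * (B\<^sup>2 / (4 * \<epsilon>))"
    using mult_left_mono[OF E1, of k] k0 by (simp add: algebra_simps)
  also have "\<dots> \<le> (A + \<epsilon>) * Eu + k * (B\<^sup>2 / (4 * \<epsilon>))"
    using W A e0 k0 by (intro add_mono mult_left_mono) auto
  finally have "(k - (A + \<epsilon>)) * Eu \<le> k * (B\<^sup>2 / (4 * \<epsilon>))" by (simp add: algebra_simps)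
  moreover have "k - (A + \<epsilon>) = \<epsilon>" unfolding \<epsilon>_def by (simp add: field_simps)
  ultimately have "\<epsilon> * Eu \<le> k * (B\<^sup>2 / (4 * \<epsilon>))" by simp
  hence "Eu \<le> k * (B\<^sup>2 / (4 * \<epsilon>)) / \<epsilon>" using e0 by (simp add: field_simps)
  also have "k * (B\<^sup>2 / (4 * \<epsilon>)) / \<epsilon> = R\<^sup>2"
  proof -
    have e2: "4 * \<epsilon> * \<epsilon> = (k - A)\<^sup>2" unfolding \<epsilon>_def by (simp add: power2_eq_square)
    have "k * (B\<^sup>2 / (4 * \<epsilon>)) / \<epsilon> = k * B\<^sup>2 / (4 * \<epsilon> * \<epsilon>)" using e0 by simp
    also have "\<dots> = k * B\<^sup>2 / (k - A)\<^sup>2" unfolding e2 ..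
    also have "\<dots> = R\<^sup>2" unfolding R_def using k0 by (simp add: power_divide power_mult_distrib)
    finally show ?thesis .
  qed
  finally have ER: "Eu \<le> R\<^sup>2" .
  have ub: "\<bar>u t\<bar> \<le> R" if t: "t \<in> {0..1}" for t
  proof -
    have "(u t)\<^sup>2 \<le> R\<^sup>2" using sup_bound[OF gu t] ER unfolding Eu_def by simp
    thus ?thesis using R0 by (simp add: power2_le_iff_abs_le)
  qed
  have "(u' has_real_derivative F t (u t)) (at t within {0..1})" if t: "t\<in>{0..1}" for t
    using du2[OF t] cl_props(3)[OF R0 ub[OF t]] unfolding G_def by simp
  thus ?thesis using gu by blast
qed

lemma LA:
  fixes g :: "real \<Rightarrow> real"
  assumes g: "integrable (lebesgue_on {0..1}) g" and t: "t \<in> {0..1::real}"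
  shows "integrable (lebesgue_on {0..t}) g" "integral\<^sup>L (lebesgue_on {0..t}) g = integral {0..t} g"
    "g integrable_on {0..t}"
proof -
  show i: "integrable (lebesgue_on {0..t}) g" using t by (intro integrable_subinterval[OF g]) auto
  show "integral\<^sup>L (lebesgue_on {0..t}) g = integral {0..t} g" by (rule lebesgue_integral_eq_integral[OF i]) auto
  show "g integrable_on {0..t}" by (rule integrable_on_lebesgue_on[OF i]) auto
qed

lemma abs_le_sq1: "\<bar>x::real\<bar> \<le> 1 + x\<^sup>2"
proof -
  have "0 \<le> (\<bar>x\<bar> - 1/2)\<^sup>2" by simp
  hence "0 \<le> x\<^sup>2 - \<bar>x\<bar> + 1/4" by (simp add: power2_eq_square algebra_simps)
  thus ?thesis by simp
qed

lemma LB: "L2_01 v \<Longrightarrow> integrable (lebesgue_on {0..1}) v"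
  unfolding L2_01_def
proof (elim conjE)
  assume m: "v \<in> borel_measurable (lebesgue_on {0..1})" and i: "integrable (lebesgue_on {0..1}) (\<lambda>t. (v t)\<^sup>2)"
  have "integrable (lebesgue_on {0..1}) (\<lambda>t. 1 + (v t)\<^sup>2)"
    by (rule Bochner_Integration.integrable_add[OF continuous_imp_integrable_real[OF continuous_on_const] i])
  thus ?thesis
    by (rule Bochner_Integration.integrable_bound[OF _ m]) (auto intro!: AE_I2 simp: abs_le_sq1)
qed

lemma LAE:
  assumes "AE s in lebesgue_on {0..1}. Pr s" "t \<le> (1::real)"
  shows "AE s in lebesgue_on {0..t}. Pr s"
proof -
  have "AE s in lebesgue. s \<in> {0..1} \<longrightarrow> Pr s" using assms(1) by (subst (asm) AE_restrict_space_iff) auto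
  hence "AE s in lebesgue. s \<in> {0..t} \<longrightarrow> Pr s" by eventually_elim (use assms(2) in auto)
  thus ?thesis by (subst AE_restrict_space_iff) auto
qed

lemma deriv_cont: "(\<And>t. t\<in>{0..1} \<Longrightarrow> (w has_real_derivative w' t) (at t within {0..1})) \<Longrightarrow> continuous_on {0..1::real} w"
  by (meson DERIV_continuous continuous_at_imp_continuous_on continuous_on_eq_continuous_within)

lemma indef_deriv:
  assumes c: "continuous_on {0..1} g" and eq: "\<And>t. t\<in>{0..1} \<Longrightarrow> w t = a + integral {0..t} g"
    and t: "t \<in> {0..1::real}"
  shows "(w has_real_derivative g t) (at t within {0..1})"
proof -
  have "((\<lambda>t. a + integral {0..t} g) has_real_derivative g t) (at t within {0..1})"
    using integral_has_real_derivative[OF c t] by (auto intro!: derivative_eq_intros)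
  thus ?thesis by (rule has_field_derivative_transform_within[where d=1]) (use t eq in auto)
qed

lemma sol_reg:
  assumes sol: "dirichlet_solution f v y" and vL: "L2_01 v"
    and f_cont: "continuous_on ({0..1} \<times> UNIV) (\<lambda>(t, x). f t x)"
  shows "\<exists>y'. continuous_on {0..1} y' \<and> y 0 = 0 \<and> y 1 = 0 \<and>
     (\<forall>t\<in>{0..1}. (y has_real_derivative y' t) (at t within {0..1})) \<and>
     (\<forall>t\<in>{0..1}. y' t = y' 0 + integral {0..t} (\<lambda>s. f s (y s)) + integral {0..t} v)"
proof -
  obtain y' y'' where h1: "H1_with_deriv y y'" and h2: "H1_with_deriv y' y''" and b: "y 0 = 0" "y 1 = 0"
    and ae: "AE t in lebesgue_on {0..1}. y'' t = f t (y t) + v t"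
    using sol unfolding dirichlet_solution_def by blast
  have i1: "integrable (lebesgue_on {0..1}) y'" and e1: "\<forall>t\<in>{0..1}. y t = y 0 + integral\<^sup>L (lebesgue_on {0..t}) y'"
    using h1 unfolding H1_with_deriv_def by blast+
  have i2: "integrable (lebesgue_on {0..1}) y''" and e2: "\<forall>t\<in>{0..1}. y' t = y' 0 + integral\<^sup>L (lebesgue_on {0..t}) y''"
    using h2 unfolding H1_with_deriv_def by blast+
  have e2': "y' t = y' 0 + integral {0..t} y''" if "t\<in>{0..1}" for t using e2[rule_format, OF that] LA(2)[OF i2 that] by simp
  have cy': "continuous_on {0..1} y'"
  proof -
    have "continuous_on {0..1} (\<lambda>t. y' 0 + integral {0..t} y'')"
      using indefinite_integral_continuous_1[OF LA(3)[OF i2, of 1]] by (auto intro!: continuous_intros)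
    thus ?thesis by (rule continuous_on_eq) (simp add: e2'[symmetric])
  qed
  have e1': "y t = y 0 + integral {0..t} y'" if "t\<in>{0..1}" for t using e1[rule_format, OF that] LA(2)[OF i1 that] by simp
  have dy: "(y has_real_derivative y' t) (at t within {0..1})" if "t\<in>{0..1}" for t
    by (rule indef_deriv[OF cy' e1' that])
  have cy: "continuous_on {0..1} y" by (rule deriv_cont[OF dy])
  have cfy: "continuous_on {0..1} (\<lambda>s. f s (y s))" by (rule cont_comp[OF f_cont cy])
  have iv: "integrable (lebesgue_on {0..1}) v" by (rule LB[OF vL])
  have "y' t = y' 0 + integral {0..t} (\<lambda>s. f s (y s)) + integral {0..t} v" if t: "t\<in>{0..1}" for t
  proof -
    have cft: "continuous_on {0..t} (\<lambda>s. f s (y s))" using t by (intro continuous_on_subset[OF cfy]) auto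
    have ift: "integrable (lebesgue_on {0..t}) (\<lambda>s. f s (y s))" by (rule continuous_imp_integrable_real[OF cft])
    have "integral\<^sup>L (lebesgue_on {0..t}) y'' = integral\<^sup>L (lebesgue_on {0..t}) (\<lambda>s. f s (y s) + v s)"
    proof (rule integral_cong_AE)
      show "y'' \<in> borel_measurable (lebesgue_on {0..t})" by (rule borel_measurable_integrable[OF LA(1)[OF i2 t]])
      show "(\<lambda>s. f s (y s) + v s) \<in> borel_measurable (lebesgue_on {0..t})"
        by (rule borel_measurable_add[OF borel_measurable_integrable[OF ift] borel_measurable_integrable[OF LA(1)[OF iv t]]])
      show "AE s in lebesgue_on {0..t}. y'' s = f s (y s) + v s" by (rule LAE[OF ae]) (use t in auto)
    qed
    also have "\<dots> = integral\<^sup>L (lebesgue_on {0..t}) (\<lambda>s. f s (y s)) + integral\<^sup>L (lebesgue_on {0..t}) v"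
      by (rule Bochner_Integration.integral_add[OF ift LA(1)[OF iv t]])
    also have "\<dots> = integral {0..t} (\<lambda>s. f s (y s)) + integral {0..t} v"
      using lebesgue_integral_eq_integral[OF ift] LA(2)[OF iv t] by simp
    finally show ?thesis using e2[rule_format, OF t] by simp
  qed
  hence "\<forall>t\<in>{0..1}. y' t = y' 0 + integral {0..t} (\<lambda>s. f s (y s)) + integral {0..t} v" by blast
  moreover have "\<forall>t\<in>{0..1}. (y has_real_derivative y' t) (at t within {0..1})" using dy by blast
  ultimately show ?thesis using cy' b by blast
qed

lemma uniq:
  fixes f fx :: "real \<Rightarrow> real \<Rightarrow> real" and v :: "real \<Rightarrow> real"
  assumes v_L2: "L2_01 v"
    and f_cont: "continuous_on ({0..1} \<times> UNIV) (\<lambda>(t, x). f t x)"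
    and fx_deriv: "\<And>t x. t \<in> {0..1} \<Longrightarrow> ((\<lambda>y. f t y) has_real_derivative fx t x) (at x)"
    and c: "- (pi\<^sup>2) < c" and cfx0: "\<And>t x. t\<in>{0..1} \<Longrightarrow> c \<le> fx t x"
    and sx: "dirichlet_solution f v x" and sy: "dirichlet_solution f v y"
  shows "\<forall>t\<in>{0..1}. y t = x t"
proof -
  obtain x' where cx': "continuous_on {0..1} x'" and bx: "x 0 = 0" "x 1 = 0"
    and dx: "\<forall>t\<in>{0..1}. (x has_real_derivative x' t) (at t within {0..1})"
    and ex: "\<forall>t\<in>{0..1}. x' t = x' 0 + integral {0..t} (\<lambda>s. f s (x s)) + integral {0..t} v"
    using sol_reg[OF sx v_L2 f_cont] by blast
  obtain y' where cy': "continuous_on {0..1} y'" and byy: "y 0 = 0" "y 1 = 0"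
    and dy: "\<forall>t\<in>{0..1}. (y has_real_derivative y' t) (at t within {0..1})"
    and ey: "\<forall>t\<in>{0..1}. y' t = y' 0 + integral {0..t} (\<lambda>s. f s (y s)) + integral {0..t} v"
    using sol_reg[OF sy v_L2 f_cont] by blast
  define w where "w t = y t - x t" for t
  define w' where "w' t = y' t - x' t" for t
  have gw: "good w w'" unfolding good_def w_def[abs_def] w'_def[abs_def]
    using cx' cy' bx byy dx dy by (auto intro!: continuous_intros derivative_eq_intros)
  have cx: "continuous_on {0..1} x" by (rule deriv_cont) (use dx in blast)
  have cy: "continuous_on {0..1} y" by (rule deriv_cont) (use dy in blast)
  define g where "g s = f s (y s) - f s (x s)" for s
  have cfx: "continuous_on {0..1} (\<lambda>s. f s (x s))" by (rule cont_comp[OF f_cont cx])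
  have cfy: "continuous_on {0..1} (\<lambda>s. f s (y s))" by (rule cont_comp[OF f_cont cy])
  have cg: "continuous_on {0..1} g" unfolding g_def using cfx cfy by (auto intro!: continuous_intros)
  have ew: "w' t = w' 0 + integral {0..t} g" if t: "t \<in> {0..1}" for t
  proof -
    have c1: "continuous_on {0..t} (\<lambda>s. f s (x s))" "continuous_on {0..t} (\<lambda>s. f s (y s))"
      using t by (auto intro: continuous_on_subset[OF cfx] continuous_on_subset[OF cfy])
    have "integral {0..t} g = integral {0..t} (\<lambda>s. f s (y s)) - integral {0..t} (\<lambda>s. f s (x s))"
      unfolding g_def using c1 by (intro integral_diff integrable_continuous_real)
    moreover have "w' 0 = y' 0 - x' 0" by (simp add: w'_def)
    ultimately show ?thesis unfolding w'_def using ex[rule_format, OF t] ey[rule_format, OF t] by simp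
  qed
  have dw: "(w' has_real_derivative g t) (at t within {0..1})" if "t\<in>{0..1}" for t
    by (rule indef_deriv[OF cg ew that])
  have cw: "continuous_on {0..1} w" "continuous_on {0..1} w'" using gw good_cont good_def by auto
  have mon: "c * (w t)\<^sup>2 \<le> g t * w t" if t: "t\<in>{0..1}" for t
  proof -
    obtain \<xi> where "f t (y t) - f t (x t) = fx t \<xi> * (y t - x t)"
      using mvt_ex[OF fx_deriv[OF t]] by blast
    hence "g t * w t = fx t \<xi> * (w t)\<^sup>2" unfolding g_def w_def by (simp add: power2_eq_square)
    thus ?thesis using cfx0[OF t, of \<xi>] by (simp add: mult_right_mono)
  qed
  define m where "m = max (-c) 0"
  define k where "k = (m + pi\<^sup>2) / 2"
  have pi2: "0 < pi\<^sup>2" by simp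
  have km: "m < k" "0 < k" "k < pi\<^sup>2" "0 \<le> m" unfolding k_def m_def using c pi2 by (auto simp: max_def)
  define Ew where "Ew = integral {0..1} (\<lambda>t. (w' t)\<^sup>2)"
  define Iww where "Iww = integral {0..1} (\<lambda>t. (w t)\<^sup>2)"
  have I0: "0 \<le> Iww" unfolding Iww_def using cw by (intro int_nonneg) (auto intro!: continuous_intros)
  have "Ew = - integral {0..1} (\<lambda>t. g t * w t)" unfolding Ew_def power2_eq_square
    by (rule ibp[OF gw cw(2) cg dw])
  also have "\<dots> \<le> - (c * Iww)"
  proof -
    have "c * Iww \<le> integral {0..1} (\<lambda>t. g t * w t)" unfolding Iww_def int_cmul[symmetric]
      using cw cg mon by (intro int_le) (auto intro!: continuous_intros)
    thus ?thesis by simp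
  qed
  also have "\<dots> \<le> m * Iww" unfolding m_def using I0 by (simp add: max_def mult_right_mono)
  finally have E1: "Ew \<le> m * Iww" .
  have W: "k * Iww \<le> Ew" unfolding Iww_def Ew_def by (rule wirtinger[OF gw km(2,3)])
  have "(k - m) * Iww \<le> 0" using E1 W by (simp add: algebra_simps)
  hence "Iww \<le> 0" using km by (simp add: mult_le_0_iff)
  hence E0: "Ew \<le> 0" using E1 I0 km by (simp add: mult_nonneg_nonpos2)
  show ?thesis
  proof
    fix t :: real assume t: "t \<in> {0..1}"
    have "(w t)\<^sup>2 \<le> 0" using sup_bound[OF gw t] E0 unfolding Ew_def by linarith
    thus "y t = x t" unfolding w_def by simp
  qed
qed

lemma deriv_int:
  assumes d: "\<And>s. s\<in>{0..1} \<Longrightarrow> (g has_real_derivative g' s) (at s within {0..1})" and t: "t \<in> {0..1::real}"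
  shows "(g' has_integral (g t - g 0)) {0..t}"
proof -
  have "\<And>s. s\<in>{0..t} \<Longrightarrow> (g has_real_derivative g' s) (at s within {0..t})"
    using d t by (metis DERIV_subset atLeastAtMost_iff atLeastatMost_subset_iff dual_order.refl dual_order.trans)
  from ftc01[OF this] t show ?thesis by auto
qed

lemma zexists:
  assumes vL: "L2_01 v"
  shows "\<exists>z zd. good z zd \<and> (\<forall>t\<in>{0..1}. zd t = zd 0 + integral {0..t} v)"
proof -
  have iv: "integrable (lebesgue_on {0..1}) v" by (rule LB[OF vL])
  have vI: "v integrable_on {0..1}" using LA(3)[OF iv, of 1] by simp
  define Pv where "Pv t = integral {0..t} v" for t
  have cPv: "continuous_on {0..1} Pv" unfolding Pv_def[abs_def] by (rule indefinite_integral_continuous_1[OF vI])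
  define C where "C = - integral {0..1} Pv"
  define zd where "zd t = C + Pv t" for t
  define z where "z t = integral {0..t} zd" for t
  have czd: "continuous_on {0..1} zd" unfolding zd_def[abs_def] using cPv by (auto intro!: continuous_intros)
  have dz: "(z has_real_derivative zd t) (at t within {0..1})" if "t\<in>{0..1}" for t
    unfolding z_def[abs_def] by (rule integral_has_real_derivative[OF czd that])
  have z0: "z 0 = 0" unfolding z_def by simp
  have "((\<lambda>t. C + Pv t) has_integral (C + integral {0..1} Pv)) {0..1}"
    using has_integral_const_real[of C 0 1] cPv cont_int by (intro has_integral_add) auto
  hence z1: "z 1 = 0" unfolding z_def zd_def[abs_def] C_def by (simp add: integral_unique)
  have "good z zd" unfolding good_def using czd dz z0 z1 by blast
  moreover have "zd t = zd 0 + integral {0..t} v" if "t\<in>{0..1}" for t unfolding zd_def Pv_def by simp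
  ultimately show ?thesis by blast
qed

lemma exist:
  fixes f fx :: "real \<Rightarrow> real \<Rightarrow> real" and v :: "real \<Rightarrow> real"
  assumes v_L2: "L2_01 v"
    and f_cont: "continuous_on ({0..1} \<times> UNIV) (\<lambda>(t, x). f t x)"
    and fx_deriv: "\<And>t x. t \<in> {0..1} \<Longrightarrow> ((\<lambda>y. f t y) has_real_derivative fx t x) (at x)"
    and fx_cont: "continuous_on ({0..1} \<times> UNIV) (\<lambda>(t, x). fx t x)"
    and A: "0 < A" "A < pi\<^sup>2" and fg: "\<And>t x. t\<in>{0..1} \<Longrightarrow> \<bar>f t x\<bar> \<le> A * \<bar>x\<bar> + B"
    and c: "- (pi\<^sup>2) < c" and cfx0: "\<And>t x. t\<in>{0..1} \<Longrightarrow> c \<le> fx t x"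
  shows "\<exists>x. dirichlet_solution f v x"
proof -
  have iv: "integrable (lebesgue_on {0..1}) v" by (rule LB[OF v_L2])
  obtain z zd where gz: "good z zd" and ezd: "\<forall>t\<in>{0..1}. zd t = zd 0 + integral {0..t} v"
    using zexists[OF v_L2] by blast
  have cz: "continuous_on {0..1} z" by (rule good_cont[OF gz])
  obtain Z where Z: "\<And>t. t\<in>{0..1} \<Longrightarrow> \<bar>z t\<bar> \<le> Z"
  proof -
    have "compact (z ` {0..1})" by (intro compact_continuous_image cz) auto
    then obtain a where a: "\<forall>y\<in>z ` {0..1}. norm y \<le> a" using compact_imp_bounded bounded_iff by metis
    show ?thesis by (rule that[of a]) (use a in auto)
  qed
  define F where "F t w = f t (w + z t)" for t w
  define Fx where "Fx t w = fx t (w + z t)" for t w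
  have czf: "continuous_on ({0..1} \<times> UNIV) (\<lambda>p::real\<times>real. z (fst p))"
    by (rule continuous_on_compose2[OF cz]) (auto intro: continuous_intros)
  have Fc: "continuous_on ({0..1} \<times> UNIV) (\<lambda>(t, w). F t w)"
  proof -
    have "continuous_on ({0..1} \<times> UNIV) (\<lambda>p. (\<lambda>(t, x). f t x) ((\<lambda>p. (fst p, snd p + z (fst p))) p))"
      by (rule continuous_on_compose2[OF f_cont]) (auto intro!: continuous_intros czf)
    thus ?thesis unfolding F_def by (simp add: case_prod_unfold)
  qed
  have Fxc: "continuous_on ({0..1} \<times> UNIV) (\<lambda>(t, w). Fx t w)"
  proof -
    have "continuous_on ({0..1} \<times> UNIV) (\<lambda>p. (\<lambda>(t, x). fx t x) ((\<lambda>p. (fst p, snd p + z (fst p))) p))"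
      by (rule continuous_on_compose2[OF fx_cont]) (auto intro!: continuous_intros czf)
    thus ?thesis unfolding Fx_def by (simp add: case_prod_unfold)
  qed
  have Fd: "((\<lambda>y. F t y) has_real_derivative Fx t w) (at w)" if t: "t\<in>{0..1}" for t w
  proof -
    have d1: "((\<lambda>y. y + z t) has_real_derivative 1) (at w)" by (auto intro!: derivative_eq_intros)
    have d2: "((\<lambda>y. f t y) has_real_derivative fx t (w + z t)) (at ((\<lambda>y. y + z t) w))"
      using fx_deriv[OF t] by simp
    show ?thesis using DERIV_chain2[OF d2 d1] unfolding F_def Fx_def by simp
  qed
  have Fg: "\<bar>F t w\<bar> \<le> A * \<bar>w\<bar> + (A * Z + B)" if t: "t\<in>{0..1}" for t w
  proof -
    have "\<bar>F t w\<bar> \<le> A * \<bar>w + z t\<bar> + B" unfolding F_def by (rule fg[OF t])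
    also have "\<dots> \<le> A * (\<bar>w\<bar> + Z) + B" using A Z[OF t] abs_triangle_ineq[of w "z t"]
      by (intro add_mono mult_left_mono) auto
    finally show ?thesis by (simp add: algebra_simps)
  qed
  have Fm: "c \<le> Fx t w" if "t\<in>{0..1}" for t w unfolding Fx_def by (rule cfx0[OF that])
  obtain u u' where gu: "good u u'" and du: "\<forall>t\<in>{0..1}. (u' has_real_derivative F t (u t)) (at t within {0..1})"
    using classical[OF Fc Fd Fxc Fg _ A(2) Fm c] A(1) by auto
  define x where "x t = u t + z t" for t
  define x' where "x' t = u' t + zd t" for t
  define x'' where "x'' t = f t (x t) + v t" for t
  have cu: "continuous_on {0..1} u" "continuous_on {0..1} u'" using gu good_cont good_def by auto
  have czd: "continuous_on {0..1} zd" using gz good_def by auto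
  have cx: "continuous_on {0..1} x" unfolding x_def[abs_def] using cu cz by (auto intro!: continuous_intros)
  have cx': "continuous_on {0..1} x'" unfolding x'_def[abs_def] using cu czd by (auto intro!: continuous_intros)
  define a where "a t = f t (x t)" for t
  have ca: "continuous_on {0..1} a" unfolding a_def[abs_def] by (rule cont_comp[OF f_cont cx])
  have ua: "(u' has_real_derivative a t) (at t within {0..1})" if "t\<in>{0..1}" for t
    using du that unfolding a_def x_def F_def by (simp add: add.commute)
  have Sets: "{0..(1::real)} \<in> sets lebesgue" by simp
  have x0: "x 0 = 0" "x 1 = 0" using gu gz unfolding x_def good_def by auto
  have H1: "H1_with_deriv x x'"
    unfolding H1_with_deriv_def L2_01_def
  proof (intro conjI ballI)
    show "x' \<in> borel_measurable (lebesgue_on {0..1})" by (rule continuous_imp_measurable_on_sets_lebesgue[OF cx' Sets])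
    show "integrable (lebesgue_on {0..1}) (\<lambda>t. (x' t)\<^sup>2)"
      by (rule continuous_imp_integrable_real) (use cx' in \<open>auto intro!: continuous_intros\<close>)
    show ix: "integrable (lebesgue_on {0..1}) x'" by (rule continuous_imp_integrable_real[OF cx'])
    fix t :: real assume t: "t \<in> {0..1}"
    have "(x' has_integral (u t - u 0) + (z t - z 0)) {0..t}" unfolding x'_def[abs_def]
      by (intro has_integral_add deriv_int t) (use gu gz in \<open>auto simp: good_def\<close>)
    hence "integral {0..t} x' = x t" using gu gz unfolding good_def x_def by (simp add: integral_unique)
    thus "x t = x 0 + integral\<^sup>L (lebesgue_on {0..t}) x'" using LA(2)[OF ix t] x0 by simp
  qed
  have H2: "H1_with_deriv x' x''"
    unfolding H1_with_deriv_def L2_01_def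
  proof (intro conjI ballI)
    have ma: "a \<in> borel_measurable (lebesgue_on {0..1})" by (rule continuous_imp_measurable_on_sets_lebesgue[OF ca Sets])
    have mv: "v \<in> borel_measurable (lebesgue_on {0..1})" using v_L2 unfolding L2_01_def by blast
    have iv2: "integrable (lebesgue_on {0..1}) (\<lambda>t. (v t)\<^sup>2)" using v_L2 unfolding L2_01_def by blast
    have ia: "integrable (lebesgue_on {0..1}) a" by (rule continuous_imp_integrable_real[OF ca])
    have ia2: "integrable (lebesgue_on {0..1}) (\<lambda>t. (a t)\<^sup>2)"
      by (rule continuous_imp_integrable_real) (use ca in \<open>auto intro!: continuous_intros\<close>)
    have xa: "x'' = (\<lambda>t. a t + v t)" unfolding x''_def a_def by auto
    show "x'' \<in> borel_measurable (lebesgue_on {0..1})" unfolding xa by (rule borel_measurable_add[OF ma mv])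
    show "integrable (lebesgue_on {0..1}) (\<lambda>t. (x'' t)\<^sup>2)" unfolding xa
    proof (rule Bochner_Integration.integrable_bound)
      show "integrable (lebesgue_on {0..1}) (\<lambda>t. 2 * (a t)\<^sup>2 + 2 * (v t)\<^sup>2)"
        using ia2 iv2 by (intro Bochner_Integration.integrable_add integrable_mult_right)
      show "(\<lambda>t. (a t + v t)\<^sup>2) \<in> borel_measurable (lebesgue_on {0..1})"
        by (rule borel_measurable_power[OF borel_measurable_add[OF ma mv]])
      show "AE t in lebesgue_on {0..1}. norm ((a t + v t)\<^sup>2) \<le> norm (2 * (a t)\<^sup>2 + 2 * (v t)\<^sup>2)"
      proof (rule AE_I2)
        fix t
        have "0 \<le> (a t - v t)\<^sup>2" by simp
        hence "(a t + v t)\<^sup>2 \<le> 2 * (a t)\<^sup>2 + 2 * (v t)\<^sup>2" by (simp add: power2_eq_square algebra_simps)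
        thus "norm ((a t + v t)\<^sup>2) \<le> norm (2 * (a t)\<^sup>2 + 2 * (v t)\<^sup>2)" by simp
      qed
    qed
    show ix: "integrable (lebesgue_on {0..1}) x''" unfolding xa by (rule Bochner_Integration.integrable_add[OF ia iv])
    fix t :: real assume t: "t \<in> {0..1}"
    have "integral\<^sup>L (lebesgue_on {0..t}) x'' = integral\<^sup>L (lebesgue_on {0..t}) a + integral\<^sup>L (lebesgue_on {0..t}) v"
      unfolding xa by (rule Bochner_Integration.integral_add[OF LA(1)[OF ia t] LA(1)[OF iv t]])
    also have "\<dots> = integral {0..t} a + integral {0..t} v" using LA(2)[OF ia t] LA(2)[OF iv t] by simp
    also have "integral {0..t} a = u' t - u' 0" using deriv_int[OF ua t] by (simp add: integral_unique)
    also have "integral {0..t} v = zd t - zd 0" using ezd[rule_format, OF t] by simp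
    finally show "x' t = x' 0 + integral\<^sup>L (lebesgue_on {0..t}) x''" unfolding x'_def by simp
  qed
  have "dirichlet_solution f v x" unfolding dirichlet_solution_def
    using H1 H2 x0 by (intro exI[of _ x'] exI[of _ x'']) (auto simp: x''_def)
  thus ?thesis by blast
qed

theorem theorem3:
  fixes f fx :: "real \<Rightarrow> real \<Rightarrow> real" and v :: "real \<Rightarrow> real"
  assumes v_L2: "L2_01 v"
    and f_cont: "continuous_on ({0..1} \<times> UNIV) (\<lambda>(t, x). f t x)"
    and fx_deriv: "\<And>t x. t \<in> {0..1} \<Longrightarrow> ((\<lambda>y. f t y) has_real_derivative fx t x) (at x)"
    and fx_cont: "continuous_on ({0..1} \<times> UNIV) (\<lambda>(t, x). fx t x)"
    and growth: "\<exists>A B. 0 < A \<and> 0 < B \<and> A < pi\<^sup>2 \<and>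
                   (\<forall>t\<in>{0..1}. \<forall>x. \<bar>f t x\<bar> \<le> A * \<bar>x\<bar> + B)"
    and fx_inf: "\<exists>c. c > - (pi\<^sup>2) \<and> (\<forall>t\<in>{0..1}. \<forall>x. c \<le> fx t x)"
  shows "\<exists>x. dirichlet_solution f v x \<and>
           (\<forall>y. dirichlet_solution f v y \<longrightarrow> (\<forall>t\<in>{0..1}. y t = x t))"
proof -
  obtain A B where AB: "0 < A" "A < pi\<^sup>2" and fg: "\<And>t x. t\<in>{0..1} \<Longrightarrow> \<bar>f t x\<bar> \<le> A * \<bar>x\<bar> + B"
    using growth by blast
  obtain c where c: "- (pi\<^sup>2) < c" and cf: "\<And>t x. t\<in>{0..1} \<Longrightarrow> c \<le> fx t x"
    using fx_inf by blast
  obtain x where sx: "dirichlet_solution f v x"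
    using exist[OF v_L2 f_cont fx_deriv fx_cont AB fg c cf] by blast
  have "\<forall>y. dirichlet_solution f v y \<longrightarrow> (\<forall>t\<in>{0..1}. y t = x t)"
    using uniq[OF v_L2 f_cont fx_deriv c cf sx] by blast
  thus ?thesis using sx by blast
qed

end
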